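(* Let $\widetilde\Delta^{m-1}$ be the last matrix produced by the Row Cancellation Algorithm applied to a connection matrix $\Delta\in\mathbb F^{m\times m}$. Then $\widetilde\Delta^{m-1}_{\cdot j}\,\widetilde\Delta^{m-1}_{j\cdot}=0$ (outer product) for every $j$; i.e. if the $j$-th column of $\widetilde\Delta^{m-1}$ is nonzero then its $j$-th row is zero.
   Context: Throughout, $\mathbb F$ is a field and $m\ge1$. $A_{i\cdot}$, $A_{\cdot j}$ are the $i$-th row and $j$-th column of $A$. $U^{pq}$ is the $m\times m$ matrix whose only nonzero entry is a $1$ in position $(p,q)$. Superscripts on matrices are indices, not powers. A connection matrix (over $\mathbb F$) is a matrix $\Delta\in\mathbb F^{m\times m}$ together with a partition $\{1,\dots,m\}=J_0\sqcup\cdots\sqcup J_b$ (the column/row partition; the $J_k$ need not consist of consecutive integers) such that $\Delta$ is upper triangular, $\Delta\Delta=0$, and $\Delta_{ij}=0$ unless $i<j$ and $(i,j)\in\bigcup_{k=1}^bJ_{k-1}\times J_k$. For $1\le r\le m-1$ the $r$-th diagonal is $\{(j-r,j):r<j\le m\}$. Row Cancellation Algorithm (RCA) applied to a connection matrix $\Delta$: set $\widetilde\Delta^0=\widetilde\Delta^1=\Delta$. For $r=1,\dots,m-1$ in turn: (Markup) mark permanently as a primary pivot every position $(j-r,j)$ on the $r$-th diagonal with $\widetilde\Delta^r_{j-r,j}\ne0$ such that no position of column $j$ was marked as a primary pivot at an earlier iteration. (Update, only for $r\le m-2$) If no position was marked at iteration $r$, put $\widetilde T^r=I$; otherwise let $j_1<\cdots<j_t$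 be the columns of the positions marked at iteration $r$, let $\widetilde T^{r,s}=I-\sum_{q=j_s+1}^m\frac{\widetilde\Delta^r_{j_s-r,q}}{\widetilde\Delta^r_{j_s-r,j_s}}U^{j_sq}$ and $\widetilde T^r=\widetilde T^{r,1}\cdots\widetilde T^{r,t}$. Set $\widetilde\Delta^{r+1}=(\widetilde T^r)^{-1}\widetilde\Delta^r\widetilde T^r$. *)

theory Defs
  imports "Jordan_Normal_Form.Gauss_Jordan_Elimination"
begin

text \<open>Matrices are Jordan_Normal_Form matrices; indices are 0-based, so the paper's
  position (i,j) with 1 \<le> i,j \<le> m corresponds to (i-1,j-1) here.
  The partition J_0,...,J_b is encoded by a block function blk with
  J_k = {i < m. blk i = k}.\<close>

definition connection_matrix :: "nat \<Rightarrow> 'a::field mat \<Rightarrow> (nat \<Rightarrow> nat) \<Rightarrow> nat \<Rightarrow> bool" where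
  "connection_matrix m D blk b \<longleftrightarrow>
     D \<in> carrier_mat m m \<and>
     (\<forall>i<m. blk i \<le> b) \<and> (\<forall>k\<le>b. \<exists>i<m. blk i = k) \<and>
     upper_triangular D \<and>
     D * D = 0\<^sub>m m m \<and>
     (\<forall>i<m. \<forall>j<m. D $$ (i, j) \<noteq> 0 \<longrightarrow>
        i < j \<and> (\<exists>k\<in>{1..b}. blk i = k - 1 \<and> blk j = k))"

text \<open>The r-th diagonal consists of the (0-based) positions (j-r, j) with r \<le> j < m.\<close>
definition rca_new_pivots :: "nat \<Rightarrow> 'a::field mat \<Rightarrow> nat set \<Rightarrow> nat \<Rightarrow> nat set" where
  "rca_new_pivots m D P r = {j. r \<le> j \<and> j < m \<and> j \<notin> P \<and> D $$ (j - r, j) \<noteq> 0}"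

definition rca_T_single :: "nat \<Rightarrow> 'a::field mat \<Rightarrow> nat \<Rightarrow> nat \<Rightarrow> 'a mat" where
  "rca_T_single m D r j = mat m m (\<lambda>(i, q).
      (if i = q then 1 else 0) -
      (if i = j \<and> j < q then D $$ (j - r, q) / D $$ (j - r, j) else 0))"

definition rca_T :: "nat \<Rightarrow> 'a::field mat \<Rightarrow> nat set \<Rightarrow> nat \<Rightarrow> 'a mat" where
  "rca_T m D N r = foldr (\<lambda>j A. rca_T_single m D r j * A) (sorted_list_of_set N) (1\<^sub>m m)"

text \<open>rca_state m D k = (matrix tilde-Delta^{k+1}, set of columns marked at iterations 1..k).\<close>
fun rca_state :: "nat \<Rightarrow> 'a::field mat \<Rightarrow> nat \<Rightarrow> 'a mat \<times> nat set" where
  "rca_state m D 0 = (D, {})"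
| "rca_state m D (Suc k) =
     (let (A, P) = rca_state m D k;
          N = rca_new_pivots m A P (Suc k);
          T = rca_T m A N (Suc k)
      in (the (mat_inverse T) * A * T, P \<union> N))"

text \<open>The last matrix tilde-Delta^{m-1} produced by the RCA (for m = 1 this is Delta).\<close>
definition rca_last :: "nat \<Rightarrow> 'a::field mat \<Rightarrow> 'a mat" where
  "rca_last m D = fst (rca_state m D (m - 2))"

end

theory Submission
  imports Defs "Jordan_Normal_Form.Determinant"
begin

lemma mult_entry:
  assumes "A \<in> carrier_mat n n" "B \<in> carrier_mat n n" "i < n" "j < n"
  shows "(A*B)$$(i,j) = (\<Sum>k<n. A$$(i,k)*B$$(k,j))"
  using assms by (simp add: scalar_prod_def lessThan_atLeast0)

lemma sum_delta_mult: assumes "l < (m::nat)" shows "(\<Sum>k<m. (if l = k then 1 else 0) * (f k :: 'a::field)) = f l"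
proof -
  have "(\<Sum>k<m. (if l = k then 1 else 0) * f k) = (\<Sum>k<m. if l = k then f k else 0)"
    by (rule sum.cong) auto
  then show ?thesis using assms by simp
qed

lemma S_carrier[simp]: "rca_T_single m A r j \<in> carrier_mat m m"
  by (simp add: rca_T_single_def)

lemma S_mult:
  fixes A M :: "'a::field mat"
  assumes M: "M \<in> carrier_mat m m" and l: "l < m" and q: "q < m"
  shows "(rca_T_single m A r j * M)$$(l,q) = M$$(l,q) -
     (if l = j then (\<Sum>k<m. (if j < k then A$$(j-r,k)/A$$(j-r,j) else 0) * M$$(k,q)) else 0)"
proof -
  let ?c = "\<lambda>k. (if j < k then A$$(j-r,k)/A$$(j-r,j) else 0)"
  have "(rca_T_single m A r j * M)$$(l,q) =
     (\<Sum>k<m. ((if l=k then 1 else 0) - (if l = j \<and> j < k then A$$(j-r,k)/A$$(j-r,j) else 0)) * M$$(k,q))"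
    by (subst mult_entry[OF S_carrier M l q]) (use l q in \<open>simp add: rca_T_single_def\<close>)
  also have "\<dots> = (\<Sum>k<m. (if l=k then 1 else 0) * M$$(k,q)) -
        (\<Sum>k<m. (if l = j \<and> j < k then A$$(j-r,k)/A$$(j-r,j) else 0) * M$$(k,q))"
    by (simp add: left_diff_distrib sum_subtractf)
  also have "(\<Sum>k<m. (if l=k then 1 else 0) * M$$(k,q)) = M$$(l,q)"
    using l by (rule sum_delta_mult)
  also have "(\<Sum>k<m. (if l = j \<and> j < k then A$$(j-r,k)/A$$(j-r,j) else 0) * M$$(k,q))
      = (if l = j then (\<Sum>k<m. ?c k * M$$(k,q)) else 0)"
    by (cases "l = j") auto
  finally show ?thesis .
qed

definition Tl :: "nat \<Rightarrow> 'a::field mat \<Rightarrow> nat \<Rightarrow> nat list \<Rightarrow> 'a mat" where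
  "Tl m A r js = foldr (\<lambda>j M. rca_T_single m A r j * M) js (1\<^sub>m m)"

lemma Tl_Cons: "Tl m A r (j # js) = rca_T_single m A r j * Tl m A r js"
  by (simp add: Tl_def)

lemma Tl_props:
  fixes A :: "'a::field mat"
  shows "Tl m A r js \<in> carrier_mat m m \<and>
    (\<forall>l<m. \<forall>q<m. l \<notin> set js \<longrightarrow> Tl m A r js $$ (l,q) = (if l = q then 1 else 0)) \<and>
    (\<forall>l<m. \<forall>q\<le>l. Tl m A r js $$ (l,q) = (if l = q then 1 else 0))"
proof (induction js)
  case Nil
  then show ?case by (auto simp: Tl_def)
next
  case (Cons j js)
  let ?M = "Tl m A r js"
  have M: "?M \<in> carrier_mat m m" using Cons by blast
  have c: "Tl m A r (j#js) \<in> carrier_mat m m" using M by (metis Tl_Cons mult_carrier_mat S_carrier)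
  have other: "Tl m A r (j#js) $$ (l,q) = ?M $$ (l,q)" if "l < m" "q < m" "l \<noteq> j" for l q
    using S_mult[OF M that(1,2), of A r j] that by (simp add: Tl_Cons)
  have jrow: "Tl m A r (j#js) $$ (j,q) = (if j = q then 1 else 0)" if "j < m" "q \<le> j" for q
  proof -
    have "(\<Sum>k<m. (if j < k then A$$(j-r,k)/A$$(j-r,j) else 0) * ?M$$(k,q)) = 0"
      using Cons that by (intro sum.neutral) auto
    moreover have "?M $$ (j,q) = (if j = q then 1 else 0)" using Cons that by auto
    ultimately show ?thesis using S_mult[OF M that(1), of q A r j] that by (simp add: Tl_Cons)
  qed
  show ?case
  proof (intro conjI allI impI)
    show "Tl m A r (j#js) \<in> carrier_mat m m" by (rule c)
  next
    fix l q assume "l < m" "q < m" "l \<notin> set (j#js)"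
    then show "Tl m A r (j#js) $$ (l,q) = (if l = q then 1 else 0)" using other Cons by auto
  next
    fix l q assume lq: "l < m" "q \<le> l"
    show "Tl m A r (j#js) $$ (l,q) = (if l = q then 1 else 0)"
    proof (cases "l = j")
      case True then show ?thesis using jrow lq by auto
    next
      case False then show ?thesis using other[of l q] Cons lq by auto
    qed
  qed
qed

lemma A_mult_S:
  fixes A :: "'a::field mat"
  assumes A: "A \<in> carrier_mat m m" and p: "p < m" and l: "l < m" and j0: "j0 < m"
  shows "(A * rca_T_single m A r j0)$$(p,l) = A$$(p,l) - A$$(p,j0) * (if j0 < l then A$$(j0-r,l)/A$$(j0-r,j0) else 0)"
proof -
  let ?c = "(if j0 < l then A$$(j0-r,l)/A$$(j0-r,j0) else 0)"
  have "(A * rca_T_single m A r j0)$$(p,l) = (\<Sum>k<m. A$$(p,k) * ((if k = l then 1 else 0) - (if k = j0 \<and> j0 < l then A$$(j0-r,l)/A$$(j0-r,j0) else 0)))"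
    by (subst mult_entry[OF A S_carrier p l]) (use l in \<open>simp add: rca_T_single_def\<close>)
  also have "\<dots> = (\<Sum>k<m. (if l = k then 1 else 0) * A$$(p,k)) - (\<Sum>k<m. (if j0 = k then 1 else 0) * (A$$(p,k) * ?c))"
    unfolding sum_subtractf[symmetric] by (rule sum.cong) auto
  also have "\<dots> = A$$(p,l) - A$$(p,j0) * ?c"
    using l j0 by (simp add: sum_delta_mult)
  finally show ?thesis .
qed

lemma Tl_clear:
  fixes A :: "'a::field mat"
  assumes A: "A \<in> carrier_mat m m"
  shows "sorted_wrt (<) js \<Longrightarrow> (\<forall>j\<in>set js. r \<le> j \<and> j < m \<and> A$$(j-r,j) \<noteq> 0) \<Longrightarrow>
    (\<forall>j\<in>set js. \<forall>j0\<in>set js. j0 < j \<longrightarrow> A$$(j-r, j0) = 0) \<Longrightarrow>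
    (\<forall>j\<in>set js. \<forall>q<m. j < q \<longrightarrow> (A * Tl m A r js)$$(j-r,q) = 0)"
proof (induction js)
  case Nil
  then show ?case by simp
next
  case (Cons j0 js)
  let ?S = "rca_T_single m A r j0"
  let ?T = "Tl m A r js"
  have T: "?T \<in> carrier_mat m m" using Tl_props by blast
  have Tid: "\<And>l q. l < m \<Longrightarrow> q < m \<Longrightarrow> l \<notin> set js \<Longrightarrow> ?T $$ (l,q) = (if l = q then 1 else 0)"
    using Tl_props by blast
  have j0: "r \<le> j0" "j0 < m" "A$$(j0-r,j0) \<noteq> 0" using Cons.prems by auto
  have eq: "(A * Tl m A r (j0#js))$$(p,q) = (\<Sum>l<m. (A * ?S)$$(p,l) * ?T$$(l,q))"
    if "p < m" "q < m" for p q
  proof -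
    have "A * Tl m A r (j0#js) = (A * ?S) * ?T"
      by (simp add: Tl_Cons assoc_mult_mat[OF A S_carrier T])
    moreover have "A * ?S \<in> carrier_mat m m" using A by simp
    ultimately show ?thesis using mult_entry[of "A * ?S" m ?T p q] T that by simp
  qed
  show ?case
  proof (intro ballI allI impI)
    fix j q assume jin: "j \<in> set (j0#js)" and q: "q < m" and jq: "j < q"
    show "(A * Tl m A r (j0 # js)) $$ (j - r, q) = 0"
    proof (cases "j = j0")
      case True
      have p: "j0 - r < m" using j0 by simp
      have AS: "(A * ?S)$$(j0-r,l) = (if j0 < l then 0 else A$$(j0-r,l))" if "l < m" for l
        using A_mult_S[OF A p that j0(2), of r] j0(3) by auto
      have "(\<Sum>l<m. (A * ?S)$$(j0-r,l) * ?T$$(l,q)) = (\<Sum>l<m. (if q = l then 1 else 0) * (A * ?S)$$(j0-r,l))"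
      proof (rule sum.cong)
        fix l assume "l \<in> {..<m}"
        then have l: "l < m" by simp
        show "(A * ?S)$$(j0-r,l) * ?T$$(l,q) = (if q = l then 1 else 0) * (A * ?S)$$(j0-r,l)"
        proof (cases "l \<in> set js")
          case True
          then have "j0 < l" using Cons.prems(1) by simp
          then show ?thesis using AS[OF l] jq True \<open>j = j0\<close> by auto
        next
          case False
          then show ?thesis using Tid[OF l q False] by auto
        qed
      qed simp
      also have "\<dots> = (A * ?S)$$(j0-r,q)" using q by (rule sum_delta_mult)
      also have "\<dots> = 0" using AS[OF q] jq True by simp
      finally show ?thesis using eq[OF p q] True by simp
    next
      case False
      then have jjs: "j \<in> set js" using jin by simp
      have p: "j - r < m" using Cons.prems(2) jjs by auto
      have z: "A$$(j-r,j0) = 0" using Cons.prems(1,3) jjs by auto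
      have "(\<Sum>l<m. (A * ?S)$$(j-r,l) * ?T$$(l,q)) = (\<Sum>l<m. A$$(j-r,l) * ?T$$(l,q))"
        using A_mult_S[OF A p _ j0(2), of _ r] z by simp
      also have "\<dots> = (A * ?T)$$(j-r,q)" using mult_entry[OF A T p q] by simp
      also have "\<dots> = 0" using Cons.IH Cons.prems jjs q jq by auto
      finally show ?thesis using eq[OF p q] by simp
    qed
  qed
qed

lemma T_invertible:
  fixes T :: "'a::field mat"
  assumes T: "T \<in> carrier_mat m m" and ut: "\<forall>l<m. \<forall>q\<le>l. T $$ (l,q) = (if l = q then 1 else 0)"
  obtains Ti where "mat_inverse T = Some Ti" "T * Ti = 1\<^sub>m m" "Ti * T = 1\<^sub>m m" "Ti \<in> carrier_mat m m"
proof -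
  have ut': "upper_triangular T" unfolding upper_triangular_def
  proof (intro allI impI)
    fix i j assume i: "i < dim_row T" and ji: "j < i"
    have im: "i < m" using i T by simp
    have "T$$(i,j) = (if i = j then 1 else 0)" using ut im ji by simp
    then show "T$$(i,j) = 0" using ji by simp
  qed
  have "det T = prod_list (diag_mat T)" by (rule det_upper_triangular[OF ut' T])
  also have "\<dots> = (\<Prod>i = 0..<m. T $$ (i,i))" using T by (simp add: prod_list_diag_prod)
  also have "\<dots> = 1" by (rule prod.neutral) (use ut in simp)
  finally have dT: "det T \<noteq> 0" by simp
  have u: "T \<in> Units (ring_mat TYPE('a) m m)" by (rule det_non_zero_imp_unit[OF T dT])
  have "mat_inverse T \<noteq> None"
  proof
    assume "mat_inverse T = None"
    then have "T \<notin> Units (ring_mat TYPE('a) m m)" by (rule mat_inverse(1)[OF T])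
    with u show False by simp
  qed
  then obtain Ti where Ti: "mat_inverse T = Some Ti" by blast
  have "T * Ti = 1\<^sub>m m \<and> Ti * T = 1\<^sub>m m \<and> Ti \<in> carrier_mat m m" by (rule mat_inverse(2)[OF T Ti])
  then show ?thesis using that[OF Ti] by blast
qed

lemma inv_upper:
  fixes T Ti :: "'a::field mat"
  assumes T: "T \<in> carrier_mat m m" and ut: "\<forall>l<m. \<forall>q\<le>l. T $$ (l,q) = (if l = q then 1 else 0)"
    and Ti: "Ti \<in> carrier_mat m m" and TTi: "T * Ti = 1\<^sub>m m"
  shows "\<forall>l<m. \<forall>q<l. Ti $$ (l,q) = 0"
proof -
  have main: "\<forall>l. m - l = d \<longrightarrow> l < m \<longrightarrow> q < l \<longrightarrow> Ti $$ (l,q) = 0" for d q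
  proof (induction d rule: less_induct)
    case (less d)
    show ?case
    proof (intro allI impI)
      fix l assume d: "m - l = d" and l: "l < m" and ql: "q < l"
      have q: "q < m" using ql l by simp
      have "0 = (T * Ti) $$ (l,q)" using TTi l q ql by simp
      also have "\<dots> = (\<Sum>k<m. T$$(l,k) * Ti$$(k,q))" using mult_entry[OF T Ti l q] .
      also have "\<dots> = (\<Sum>k<m. (if l = k then 1 else 0) * Ti$$(k,q))"
      proof (rule sum.cong)
        fix k assume "k \<in> {..<m}"
        then have k: "k < m" by simp
        show "T$$(l,k) * Ti$$(k,q) = (if l = k then 1 else 0) * Ti$$(k,q)"
        proof (cases "k \<le> l")
          case True
          have "T$$(l,k) = (if l = k then 1 else 0)" using ut l True by blast
          then show ?thesis by simp
        next
          case False
          have mk: "m - k < d" using d k False by arith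
          have "Ti$$(k,q) = 0" using less.IH[OF mk, rule_format, of k] k ql False by simp
          then show ?thesis by simp
        qed
      qed simp
      also have "\<dots> = Ti$$(l,q)" using l by (rule sum_delta_mult)
      finally show "Ti $$ (l,q) = 0" by simp
    qed
  qed
  show ?thesis using main by blast
qed

definition inv_st :: "nat \<Rightarrow> 'a::field mat \<Rightarrow> nat set \<Rightarrow> nat \<Rightarrow> bool" where
  "inv_st m A P r \<longleftrightarrow> A \<in> carrier_mat m m \<and> A * A = 0\<^sub>m m m \<and> P \<subseteq> {..<m} \<and>
   (\<forall>i<m. \<forall>j<m. j \<notin> P \<longrightarrow> j < i + r \<longrightarrow> A$$(i,j) = 0) \<and>
   (\<forall>j\<in>P. \<exists>p<m. A$$(p,j) \<noteq> 0 \<and> (\<forall>l<m. j<l \<longrightarrow> A$$(p,l)=0) \<and> (\<forall>i<m. p<i \<longrightarrow> A$$(i,j)=0) \<and> j < p + r) \<and>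
   (\<forall>j\<in>P. \<forall>k<m. A$$(j,k) = 0)"

lemma step:
  fixes A :: "'a::field mat"
  assumes inv: "inv_st m A P r"
  defines "N \<equiv> rca_new_pivots m A P r"
  defines "T \<equiv> rca_T m A N r"
  shows "inv_st m (the (mat_inverse T) * A * T) (P \<union> N) (Suc r)"
proof -
  have A: "A \<in> carrier_mat m m" and AA: "A * A = 0\<^sub>m m m" and Pm: "P \<subseteq> {..<m}"
    and I1: "\<And>i j. i < m \<Longrightarrow> j < m \<Longrightarrow> j \<notin> P \<Longrightarrow> j < i + r \<Longrightarrow> A$$(i,j) = 0"
    and I2: "\<forall>j\<in>P. \<exists>p<m. A$$(p,j) \<noteq> 0 \<and> (\<forall>l<m. j<l \<longrightarrow> A$$(p,l)=0) \<and> (\<forall>i<m. p<i \<longrightarrow> A$$(i,j)=0) \<and> j < p + r"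
    and I3: "\<And>j k. j \<in> P \<Longrightarrow> k < m \<Longrightarrow> A$$(j,k) = 0"
    using inv unfolding inv_st_def by blast+
  have Nmem: "j \<in> N \<longleftrightarrow> r \<le> j \<and> j < m \<and> j \<notin> P \<and> A$$(j-r,j) \<noteq> 0" for j
    by (simp add: N_def rca_new_pivots_def)
  have Nm: "N \<subseteq> {..<m}" using Nmem by auto
  have fN: "finite N" using Nm finite_subset by blast
  have Tdef: "T = Tl m A r (sorted_list_of_set N)" by (simp add: T_def rca_T_def Tl_def)
  have T: "T \<in> carrier_mat m m" using Tl_props Tdef by metis
  have Tid: "\<And>l q. l < m \<Longrightarrow> q < m \<Longrightarrow> l \<notin> N \<Longrightarrow> T $$ (l,q) = (if l = q then 1 else 0)"
    using Tl_props[of m A r "sorted_list_of_set N"] fN Tdef by auto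
  have Tut: "\<forall>l<m. \<forall>q\<le>l. T $$ (l,q) = (if l = q then 1 else 0)"
    using Tl_props[of m A r "sorted_list_of_set N"] Tdef by auto
  define B where "B = A * T"
  have B: "B \<in> carrier_mat m m" using A T B_def by simp
  have clear: "\<And>j q. j \<in> N \<Longrightarrow> q < m \<Longrightarrow> j < q \<Longrightarrow> B$$(j-r,q) = 0"
  proof -
    fix j q assume "j \<in> N" "q < m" "j < q"
    moreover have "\<forall>j\<in>set (sorted_list_of_set N). r \<le> j \<and> j < m \<and> A$$(j-r,j) \<noteq> 0"
      using fN Nmem by auto
    moreover have "\<forall>j\<in>set (sorted_list_of_set N). \<forall>j0\<in>set (sorted_list_of_set N). j0 < j \<longrightarrow> A$$(j-r, j0) = 0"
      using fN Nmem I1 by auto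
    ultimately show "B$$(j-r,q) = 0"
      using Tl_clear[OF A, of "sorted_list_of_set N" r] strict_sorted_list_of_set fN
      unfolding B_def Tdef by auto
  qed
  obtain Ti where Ti0: "mat_inverse T = Some Ti" and TTi: "T * Ti = 1\<^sub>m m" and TiT: "Ti * T = 1\<^sub>m m"
    and Ti: "Ti \<in> carrier_mat m m"
    using T_invertible[OF T Tut] by blast
  have Tiut: "\<And>l q. l < m \<Longrightarrow> q < l \<Longrightarrow> Ti $$ (l,q) = 0" using inv_upper[OF T Tut Ti TTi] by blast
  have Tiid: "Ti $$ (l,q) = (if l = q then 1 else 0)" if "l < m" "q < m" "l \<notin> N" for l q
  proof -
    have "(if l = q then 1 else 0) = (T * Ti) $$ (l,q)" using TTi that by simp
    also have "\<dots> = (\<Sum>k<m. (if l = k then 1 else 0) * Ti$$(k,q))"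
      using mult_entry[OF T Ti that(1,2)] Tid[OF that(1) _ that(3)] by simp
    also have "\<dots> = Ti $$ (l,q)" using that(1) by (rule sum_delta_mult)
    finally show ?thesis by simp
  qed
  define A' where "A' = Ti * B"
  have A'eq: "the (mat_inverse T) * A * T = A'"
    using Ti0 by (simp add: A'_def B_def assoc_mult_mat[OF Ti A T])
  have A': "A' \<in> carrier_mat m m" using Ti B A'_def by simp
  have A'A': "A' * A' = 0\<^sub>m m m"
  proof -
    have "A' * A' = Ti * (A * T) * (Ti * (A * T))" by (simp add: A'_def B_def)
    also have "\<dots> = Ti * (A * ((T * Ti) * (A * T)))"
      using A T Ti by (simp add: assoc_mult_mat[of _ m m _ m _ m])
    also have "\<dots> = Ti * ((A * A) * T)"
      using A T Ti TTi by (simp add: assoc_mult_mat[of _ m m _ m _ m])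
    also have "\<dots> = 0\<^sub>m m m" using AA Ti T by simp
    finally show ?thesis .
  qed
  have Bent: "B$$(i,q) = (\<Sum>l<m. A$$(i,l) * T$$(l,q))" if "i < m" "q < m" for i q
    using mult_entry[OF A T that] B_def by simp
  have B1: "B$$(i,q) = A$$(i,q)" if iq: "i < m" "q < m" and h: "\<forall>l\<in>N. l < q \<longrightarrow> A$$(i,l) = 0" for i q
  proof -
    have "B$$(i,q) = (\<Sum>l<m. (if q = l then 1 else 0) * A$$(i,l))"
      unfolding Bent[OF iq]
    proof (rule sum.cong)
      fix l assume "l \<in> {..<m}"
      then have l: "l < m" by simp
      show "A$$(i,l) * T$$(l,q) = (if q = l then 1 else 0) * A$$(i,l)"
      proof (cases "l \<in> N")
        case False then show ?thesis using Tid[OF l iq(2) False] by auto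
      next
        case True
        show ?thesis
        proof (cases "l < q")
          case True then show ?thesis using h \<open>l \<in> N\<close> by auto
        next
          case False then show ?thesis using Tut l by auto
        qed
      qed
    qed simp
    also have "\<dots> = A$$(i,q)" using iq(2) by (rule sum_delta_mult)
    finally show ?thesis .
  qed
  have B2: "B$$(i,q) = 0" if "i < m" "q < m" "\<forall>k<m. A$$(i,k) = 0" for i q
    using Bent[OF that(1,2)] that(3) by simp
  have A'1: "A'$$(i,q) = B$$(i,q)" if "i < m" "q < m" "i \<notin> N" for i q
  proof -
    have "A'$$(i,q) = (\<Sum>k<m. (if i = k then 1 else 0) * B$$(k,q))"
      using mult_entry[OF Ti B that(1,2)] Tiid[OF that(1) _ that(3)] A'_def by simp
    also have "\<dots> = B$$(i,q)" using that(1) by (rule sum_delta_mult)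
    finally show ?thesis .
  qed
  have A'2: "A'$$(i,q) = 0" if "i < m" "q < m" "\<forall>k<m. i \<le> k \<longrightarrow> B$$(k,q) = 0" for i q
  proof -
    have "A'$$(i,q) = (\<Sum>k<m. Ti$$(i,k) * B$$(k,q))"
      using mult_entry[OF Ti B that(1,2)] A'_def by simp
    also have "\<dots> = 0"
    proof (rule sum.neutral, intro ballI)
      fix k assume "k \<in> {..<m}"
      then show "Ti$$(i,k) * B$$(k,q) = 0" using that Tiut[OF that(1), of k] by (cases "i \<le> k") auto
    qed
    finally show ?thesis .
  qed
  have NP: "p \<notin> N" if p: "p < m" and j: "j < m" and nz: "A$$(p,j) \<noteq> 0" and low: "\<forall>i<m. p<i \<longrightarrow> A$$(i,j)=0" for p j
  proof
    assume "p \<in> N"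
    then have pr: "r \<le> p" "p \<notin> P" "A$$(p-r,p) \<noteq> 0" using Nmem by auto
    have pr': "p - r < m" using p by simp
    have "0 = (A * A)$$(p-r,j)" using AA pr' j by simp
    also have "\<dots> = (\<Sum>l<m. A$$(p-r,l) * A$$(l,j))" using mult_entry[OF A A pr' j] .
    also have "\<dots> = (\<Sum>l<m. (if p = l then 1 else 0) * (A$$(p-r,l) * A$$(l,j)))"
    proof (rule sum.cong)
      fix l assume "l \<in> {..<m}"
      then have l: "l < m" by simp
      show "A$$(p-r,l) * A$$(l,j) = (if p = l then 1 else 0) * (A$$(p-r,l) * A$$(l,j))"
      proof (cases "p < l")
        case True then show ?thesis using low l by auto
      next
        case False
        show ?thesis
        proof (cases "l \<in> P")
          case True then show ?thesis using I3[OF True j] by auto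
        next
          case lP: False
          show ?thesis
          proof (cases "l = p")
            case False
            then have "l < p - r + r" using \<open>\<not> p < l\<close> pr by auto
            then show ?thesis using I1[OF pr' l lP] False by auto
          qed simp
        qed
      qed
    qed simp
    also have "\<dots> = A$$(p-r,p) * A$$(p,j)" using p by (rule sum_delta_mult)
    finally show False using pr(3) nz by simp
  qed
  have J1: "A'$$(i,j) = 0" if ij: "i < m" "j < m" "j \<notin> P \<union> N" "j < i + Suc r" for i j
  proof (rule A'2[OF ij(1,2)], intro allI impI)
    fix k assume k: "k < m" "i \<le> k"
    have jP: "j \<notin> P" and jN: "j \<notin> N" using ij by auto
    have "B$$(k,j) = A$$(k,j)"
      by (rule B1[OF k(1) ij(2)]) (use I1 k ij Nmem in auto)
    also have "\<dots> = 0"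
    proof (cases "j < k + r")
      case True then show ?thesis using I1[OF k(1) ij(2) jP] by simp
    next
      case False
      then have "j = k + r" using ij k by simp
      then show ?thesis using jN jP Nmem ij(2) by auto
    qed
    finally show "B$$(k,j) = 0" .
  qed
  have J3old: "A'$$(j,k) = 0" if "j \<in> P" "k < m" for j k
  proof -
    have j: "j < m" "j \<notin> N" using that Pm Nmem by auto
    then show ?thesis using A'1[OF j(1) that(2) j(2)] B2[OF j(1) that(2)] I3[OF that(1)] by simp
  qed
  have J2: "\<exists>p<m. A'$$(p,j) \<noteq> 0 \<and> (\<forall>l<m. j<l \<longrightarrow> A'$$(p,l)=0) \<and> (\<forall>i<m. p<i \<longrightarrow> A'$$(i,j)=0) \<and> j < p + Suc r"
    if jPN: "j \<in> P \<union> N" for j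
  proof (cases "j \<in> P")
    case True
    then obtain p where p: "p < m" "A$$(p,j) \<noteq> 0" "\<forall>l<m. j<l \<longrightarrow> A$$(p,l)=0" "\<forall>i<m. p<i \<longrightarrow> A$$(i,j)=0" "j < p + r"
      using I2 by blast
    have j: "j < m" "j \<notin> N" using True Pm Nmem by auto
    have pN: "p \<notin> N" using NP[OF p(1) j(1) p(2) p(4)] .
    have Bpj: "B$$(p,j) = A$$(p,j)"
      by (rule B1[OF p(1) j(1)]) (use I1 p Nmem in auto)
    show ?thesis
    proof (intro exI conjI allI impI)
      show "p < m" by fact
      show "A'$$(p,j) \<noteq> 0" using A'1[OF p(1) j(1) pN] Bpj p(2) by simp
      show "j < p + Suc r" using p(5) by simp
    next
      fix l assume l: "l < m" "j < l"
      have "B$$(p,l) = A$$(p,l)"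
      proof (rule B1[OF p(1) l(1)], intro ballI impI)
        fix l' assume l': "l' \<in> N" "l' < l"
        show "A$$(p,l') = 0"
        proof (cases "l' < j")
          case True then show ?thesis using I1[OF p(1)] l' Nmem p(5) by auto
        next
          case False
          then have "j < l'" using l' j(2) by (cases "l' = j") auto
          then show ?thesis using p(3) l' Nmem by auto
        qed
      qed
      then show "A'$$(p,l) = 0" using A'1[OF p(1) l(1) pN] p(3) l by simp
    next
      fix i assume i: "i < m" "p < i"
      show "A'$$(i,j) = 0"
      proof (rule A'2[OF i(1) j(1)], intro allI impI)
        fix k assume k: "k < m" "i \<le> k"
        have "B$$(k,j) = A$$(k,j)"
          by (rule B1[OF k(1) j(1)]) (use I1 k i p Nmem in auto)
        then show "B$$(k,j) = 0" using p(4) k i by simp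
      qed
    qed
  next
    case False
    then have jN: "j \<in> N" using jPN by simp
    then have j: "r \<le> j" "j < m" "j \<notin> P" "A$$(j-r,j) \<noteq> 0" using Nmem by auto
    define p where "p = j - r"
    have p: "p < m" using j p_def by simp
    have low: "\<forall>i<m. p<i \<longrightarrow> A$$(i,j)=0" using I1 j p_def by auto
    have pN: "p \<notin> N" using NP[OF p j(2) _ low] j(4) p_def by simp
    have Bpj: "B$$(p,j) = A$$(p,j)"
      by (rule B1[OF p j(2)]) (use I1 p p_def j Nmem in auto)
    show ?thesis
    proof (intro exI conjI allI impI)
      show "p < m" by fact
      show "A'$$(p,j) \<noteq> 0" using A'1[OF p j(2) pN] Bpj j(4) p_def by simp
      show "j < p + Suc r" using p_def j by simp
    next
      fix l assume l: "l < m" "j < l"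
      show "A'$$(p,l) = 0" using A'1[OF p l(1) pN] clear[OF jN l] p_def by simp
    next
      fix i assume i: "i < m" "p < i"
      show "A'$$(i,j) = 0"
      proof (rule A'2[OF i(1) j(2)], intro allI impI)
        fix k assume k: "k < m" "i \<le> k"
        have "B$$(k,j) = A$$(k,j)"
          by (rule B1[OF k(1) j(2)]) (use I1 k i p_def j Nmem in auto)
        then show "B$$(k,j) = 0" using low k i by simp
      qed
    qed
  qed
  have J3new: "A'$$(j,k) = 0" if jN: "j \<in> N" and k: "k < m" for j k
  proof -
    have j: "r \<le> j" "j < m" "j \<notin> P" "A$$(j-r,j) \<noteq> 0" using jN Nmem by auto
    define p where "p = j - r"
    have p: "p < m" using j p_def by simp
    have low: "\<forall>i<m. p<i \<longrightarrow> A$$(i,j)=0" using I1 j p_def by auto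
    have pN: "p \<notin> N" using NP[OF p j(2) _ low] j(4) p_def by simp
    have Bpj: "B$$(p,j) = A$$(p,j)"
      by (rule B1[OF p j(2)]) (use I1 p p_def j Nmem in auto)
    have "0 = (A' * A')$$(p,k)" using A'A' p k by simp
    also have "\<dots> = (\<Sum>l<m. A'$$(p,l) * A'$$(l,k))" using mult_entry[OF A' A' p k] .
    also have "\<dots> = (\<Sum>l<m. (if j = l then 1 else 0) * (A'$$(p,l) * A'$$(l,k)))"
    proof (rule sum.cong)
      fix l assume "l \<in> {..<m}"
      then have l: "l < m" by simp
      show "A'$$(p,l) * A'$$(l,k) = (if j = l then 1 else 0) * (A'$$(p,l) * A'$$(l,k))"
      proof (cases "j < l")
        case True then show ?thesis using A'1[OF p l pN] clear[OF jN l True] p_def by simp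
      next
        case False
        show ?thesis
        proof (cases "l = j")
          case lj: False
          then have lj': "l < j" using False by simp
          show ?thesis
          proof (cases "l \<in> P")
            case True then show ?thesis using J3old[OF True k] by simp
          next
            case lP: False
            have "B$$(p,l) = A$$(p,l)"
              by (rule B1[OF p l]) (use I1 p p_def j Nmem lj' in auto)
            also have "\<dots> = 0" using I1[OF p l lP] lj' p_def j by simp
            finally show ?thesis using A'1[OF p l pN] lj by simp
          qed
        qed simp
      qed
    qed simp
    also have "\<dots> = A'$$(p,j) * A'$$(j,k)" using j(2) by (rule sum_delta_mult)
    also have "A'$$(p,j) = A$$(j-r,j)" using A'1[OF p j(2) pN] Bpj p_def by simp
    finally show ?thesis using j(4) by simp
  qed
  show ?thesis
    unfolding A'eq inv_st_def
  proof (intro conjI)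
    show "A' \<in> carrier_mat m m" by fact
    show "A' * A' = 0\<^sub>m m m" by fact
    show "P \<union> N \<subseteq> {..<m}" using Pm Nm by simp
    show "\<forall>i<m. \<forall>j<m. j \<notin> P \<union> N \<longrightarrow> j < i + Suc r \<longrightarrow> A' $$ (i, j) = 0" using J1 by blast
    show "\<forall>j\<in>P \<union> N. \<exists>p<m. A' $$ (p, j) \<noteq> 0 \<and> (\<forall>l<m. j < l \<longrightarrow> A' $$ (p, l) = 0) \<and>
        (\<forall>i<m. p < i \<longrightarrow> A' $$ (i, j) = 0) \<and> j < p + Suc r" using J2 by blast
    show "\<forall>j\<in>P \<union> N. \<forall>k<m. A' $$ (j, k) = 0" using J3old J3new by blast
  qed
qed

lemma state_inv:
  fixes D :: "'a::field mat"
  assumes cm: "connection_matrix m D blk b"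
  shows "inv_st m (fst (rca_state m D k)) (snd (rca_state m D k)) (Suc k)"
proof (induction k)
  case 0
  have D: "D \<in> carrier_mat m m" and DD: "D * D = 0\<^sub>m m m"
    and nz: "\<forall>i<m. \<forall>j<m. D $$ (i, j) \<noteq> 0 \<longrightarrow> i < j"
    using cm unfolding connection_matrix_def by blast+
  show ?case unfolding inv_st_def
  proof (intro conjI)
    show "\<forall>i<m. \<forall>j<m. j \<notin> snd (rca_state m D 0) \<longrightarrow> j < i + Suc 0 \<longrightarrow> fst (rca_state m D 0) $$ (i, j) = 0"
      using nz by fastforce
  qed (use D DD in auto)
next
  case (Suc k)
  obtain A P where st: "rca_state m D k = (A, P)" by (cases "rca_state m D k") auto
  have "inv_st m A P (Suc k)" using Suc st by simp
  from step[OF this] show ?case by (simp add: st Let_def)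
qed

theorem mainTheorem12:
  fixes D :: "'a::field mat" and m b :: nat and blk :: "nat \<Rightarrow> nat"
  assumes "m \<ge> 1"
    and "connection_matrix m D blk b"
  shows "\<forall>j<m. \<forall>i<m. \<forall>k<m. rca_last m D $$ (i, j) * rca_last m D $$ (j, k) = 0"
proof (intro allI impI)
  fix j i k assume j: "j < m" and i: "i < m" and k: "k < m"
  define A where "A = rca_last m D"
  define P where "P = snd (rca_state m D (m - 2))"
  define r where "r = Suc (m - 2)"
  have inv: "inv_st m A P r" using state_inv[OF assms(2), of "m - 2"] by (simp add: A_def P_def r_def rca_last_def)
  have Ac: "A \<in> carrier_mat m m" and AA: "A * A = 0\<^sub>m m m"
    and I1: "\<And>i j. i < m \<Longrightarrow> j < m \<Longrightarrow> j \<notin> P \<Longrightarrow> j < i + r \<Longrightarrow> A$$(i,j) = 0"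
    and I3: "\<And>j k. j \<in> P \<Longrightarrow> k < m \<Longrightarrow> A$$(j,k) = 0"
    using inv unfolding inv_st_def by blast+
  have rm: "m - 1 \<le> r" "1 \<le> r" using r_def by auto
  show "rca_last m D $$ (i, j) * rca_last m D $$ (j, k) = 0"
    unfolding A_def[symmetric]
  proof (cases "j \<in> P \<or> A$$(i,j) = 0")
    case True
    then show "A$$(i,j) * A$$(j,k) = 0" using I3 k by auto
  next
    case False
    then have jP: "j \<notin> P" and nz: "A$$(i,j) \<noteq> 0" by auto
    have "\<not> j < i + r" using I1[OF i j jP] nz by blast
    then have jr: "j = i + r" "j = m - 1" using j rm by auto
    have "0 = (A * A)$$(i,k)" using AA i k by simp
    also have "\<dots> = (\<Sum>l<m. A$$(i,l) * A$$(l,k))" using mult_entry[OF Ac Ac i k] .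
    also have "\<dots> = (\<Sum>l<m. (if j = l then 1 else 0) * (A$$(i,l) * A$$(l,k)))"
    proof (rule sum.cong)
      fix l assume "l \<in> {..<m}"
      then have l: "l < m" by simp
      show "A$$(i,l) * A$$(l,k) = (if j = l then 1 else 0) * (A$$(i,l) * A$$(l,k))"
      proof (cases "l = j")
        case False
        show ?thesis
        proof (cases "l \<in> P")
          case True then show ?thesis using I3[OF True k] False by simp
        next
          case lP: False
          have "l < i + r" using l False jr by auto
          then show ?thesis using I1[OF i l lP] False by simp
        qed
      qed simp
    qed simp
    also have "\<dots> = A$$(i,j) * A$$(j,k)" using j by (rule sum_delta_mult)
    finally show "A$$(i,j) * A$$(j,k) = 0" by simp
  qed
qed

end
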